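(* If $m>0$ is an integer, then $G_m(\lambda)$ is a polynomial in $\lambda$ of degree $m$ with zero constant term. Writing $G_m(\lambda)=\sum_{k=1}^m(-1)^{k-1}g(m,k)\lambda^k$ (and setting $g(m,k)=0$ for $k>m$ and $g(m,0)=0$), one has for all $m>1$ and $1\le k\le m$: $$k\cdot g(m,k)=g(m-1,k)+g(m-1,k-1).$$
   Context: For an integer $m$ let $R_m(z)=\sum_{n\ge1} n^{n-m}\frac{z^n}{n!}$, a formal power series in $z$. Let $T(z)=\sum_{n\ge1}n^{n-1}\frac{z^n}{n!}$ (the tree function); it satisfies $T(z)=z e^{T(z)}$, so its compositional inverse is $z=\lambda e^{-\lambda}$. Define the formal power series $G_m(\lambda):=R_m(\lambda e^{-\lambda})$, so that $G_m(T(z))=R_m(z)$. *)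

theory Defs
  imports "HOL-Computational_Algebra.Computational_Algebra"
begin

definition R :: "int \<Rightarrow> real fps" where
  "R m = Abs_fps (\<lambda>n. if n = 0 then 0 else (real n) powi (int n - m) / fact n)"

text \<open>The compositional inverse of the tree function: lambda * exp(-lambda).\<close>
definition Tinv :: "real fps" where
  "Tinv = fps_X * fps_exp (-1)"

definition G :: "int \<Rightarrow> real fps" where
  "G m = fps_compose (R m) Tinv"

definition g :: "int \<Rightarrow> nat \<Rightarrow> real" where
  "g m k = (if k = 0 \<or> int k > m then 0 else (-1) ^ (k - 1) * fps_nth (G m) k)"

end

theory Submission imports Defs begin

definition Dd :: "nat \<Rightarrow> int \<Rightarrow> real" where
  "Dd k j = (\<Sum>n=1..k. real (k choose n) * (-1)^(k-n) * real n powi j)"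

lemma Dd_rec: "Dd (Suc k) (j+1) = real (Suc k) * Dd (Suc k) j + real (Suc k) * Dd k j"
proof -
  have t: "real (Suc k choose n) * real n = real (Suc k) * real (Suc k choose n) - real (Suc k) * real (k choose n)"
    if nin: "n \<in> {1..Suc k}" for n
  proof -
    obtain n' where n: "n = Suc n'" using nin by (cases n) auto
    have "n * (Suc k choose n) = Suc k * (k choose n')"
      using times_binomial_minus1_eq[of n "Suc k"] n by simp
    moreover have "(Suc k choose n) = (k choose n') + (k choose n)" using n by simp
    ultimately have "real n * real (Suc k choose n) = real (Suc k) * (real (Suc k choose n) - real (k choose n))"
      by (metis add_diff_cancel_right' of_nat_add of_nat_mult)
    then show ?thesis by (simp add: algebra_simps)
  qed
  have "Dd (Suc k) (j+1) = (\<Sum>n=1..Suc k. (real (Suc k choose n) * real n) * (-1)^(Suc k-n) * real n powi j)"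
    unfolding Dd_def
    by (intro sum.cong refl) (auto simp: power_int_add mult_ac)
  also have "\<dots> = (\<Sum>n=1..Suc k. (real (Suc k) * real (Suc k choose n) - real (Suc k) * real (k choose n)) * (-1)^(Suc k-n) * real n powi j)"
    by (intro sum.cong refl) (simp add: t)
  also have "\<dots> = real (Suc k) * Dd (Suc k) j - real (Suc k) * (\<Sum>n=1..Suc k. real (k choose n) * (-1)^(Suc k-n) * real n powi j)"
    by (simp only: Dd_def sum_distrib_left sum_subtractf[symmetric], intro sum.cong refl, simp add: algebra_simps)
  also have "(\<Sum>n=1..Suc k. real (k choose n) * (-1)^(Suc k-n) * real n powi j) = - Dd k j"
  proof -
    have "(\<Sum>n=1..Suc k. real (k choose n) * (-1)^(Suc k-n) * real n powi j) = (\<Sum>n=1..k. real (k choose n) * (-1)^(Suc k-n) * real n powi j)"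
      by (simp add: sum.cl_ivl_Suc)
    also have "\<dots> = (\<Sum>n=1..k. - (real (k choose n) * (-1)^(k-n) * real n powi j))"
      by (intro sum.cong refl) (simp add: Suc_diff_le)
    finally show ?thesis unfolding Dd_def by (simp add: sum_negf)
  qed
  finally show ?thesis by simp
qed

lemma Dd_0: "k \<ge> 1 \<Longrightarrow> Dd k 0 = - ((-1)^k)"
proof -
  assume k: "k \<ge> 1"
  have "0 = (1 + (-1)::real)^k" using k by simp
  also have "\<dots> = (\<Sum>n\<le>k. real (k choose n) * 1^n * (-1)^(k-n))" by (rule binomial_ring)
  also have "\<dots> = (\<Sum>n\<in>insert 0 {1..k}. real (k choose n) * (-1)^(k-n))"
    by (intro sum.cong) auto
  also have "\<dots> = (-1)^k + Dd k 0" unfolding Dd_def by (subst sum.insert) auto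
  finally show ?thesis by simp
qed

lemma Dd_vanish: "1 \<le> j \<Longrightarrow> j < k \<Longrightarrow> Dd k (int j) = 0"
proof (induction j arbitrary: k rule: nat_induct_at_least)
  case base
  then obtain k' where k: "k = Suc k'" "k' \<ge> 1" by (cases k) auto
  show ?case using Dd_rec[of k' 0] Dd_0[of k] Dd_0[of k'] k by simp
next
  case (Suc j)
  then obtain k' where k: "k = Suc k'" by (cases k) auto
  show ?case using Dd_rec[of k' "int j"] Suc k by (simp add: add.commute)
qed

lemma Tinv_pow_nth: "(Tinv ^ i) $ k = (if k < i then 0 else (- real i)^(k-i) / fact (k-i))"
proof -
  have "Tinv ^ i = fps_X ^ i * fps_exp (of_nat i * (-1))"
    unfolding Tinv_def by (simp add: power_mult_distrib fps_exp_power_mult)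
  then show ?thesis by (simp add: fps_X_power_mult_nth)
qed

lemma G_nth: "G m $ k = Dd k (int k - m) / fact k"
proof -
  have "G m $ k = (\<Sum>i=0..k. R m $ i * (Tinv ^ i $ k))"
    unfolding G_def by (rule fps_compose_nth)
  also have "\<dots> = (\<Sum>i\<in>insert 0 {1..k}. R m $ i * (Tinv ^ i $ k))"
    by (intro sum.cong) auto
  also have "\<dots> = (\<Sum>i=1..k. R m $ i * (Tinv ^ i $ k))"
    by (subst sum.insert) (auto simp: R_def)
  also have "\<dots> = (\<Sum>i=1..k. real (k choose i) * (-1)^(k-i) * real i powi (int k - m) / fact k)"
  proof (intro sum.cong refl)
    fix i assume i: "i \<in> {1..k}"
    have i0: "real i \<noteq> 0" using i by auto
    have ik: "i \<le> k" using i by auto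
    have pw: "real i powi (int i - m) * real i ^ (k - i) = real i powi (int k - m)"
    proof -
      have e1: "real i ^ (k - i) = real i powi int (k - i)" by (simp add: power_int_of_nat)
      have e2: "real i powi (int k - m) = real i powi ((int i - m) + int (k - i))"
        by (rule arg_cong[where f="power_int (real i)"]) (use ik in simp)
      have e3: "real i powi ((int i - m) + int (k - i)) = real i powi (int i - m) * real i powi int (k - i)"
        by (rule power_int_add) (use i0 in simp)
      show ?thesis unfolding e1 e2 e3 ..
    qed
    have "R m $ i * (Tinv ^ i $ k) = (real i powi (int i - m) * real i ^ (k - i)) * (-1)^(k-i) / (fact i * fact (k - i))"
      using i by (simp add: R_def Tinv_pow_nth power_minus' power_mult_distrib)
    also have "\<dots> = (-1)^(k-i) * real i powi (int k - m) / (fact i * fact (k - i))"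
      unfolding pw[symmetric] by (simp add: mult_ac)
    also have "\<dots> = real (k choose i) * (-1)^(k-i) * real i powi (int k - m) / fact k"
      unfolding binomial_fact[OF ik] by simp
    finally show "R m $ i * (Tinv ^ i $ k) = real (k choose i) * (-1)^(k-i) * real i powi (int k - m) / fact k" .
  qed
  also have "\<dots> = Dd k (int k - m) / fact k"
    unfolding Dd_def by (simp add: sum_divide_distrib)
  finally show ?thesis .
qed


lemma G_0: "G m $ 0 = 0"
  by (simp add: G_nth Dd_def)

lemma G_van: assumes "m > 0" "int k > m" shows "G m $ k = 0"
proof -
  define j where "j = nat (int k - m)"
  have j: "int j = int k - m" "1 \<le> j" "j < k" using assms by (auto simp: j_def)
  show ?thesis using Dd_vanish[OF j(2,3)] j(1) by (simp add: G_nth)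
qed

lemma G_lead: assumes "m > 0" shows "G m $ nat m \<noteq> 0"
proof -
  have "int (nat m) - m = 0" using assms by simp
  moreover have "Dd (nat m) 0 \<noteq> 0" using Dd_0[of "nat m"] assms by simp
  ultimately show ?thesis by (simp add: G_nth)
qed

lemma G_rec: assumes "k \<ge> 1" shows "real k * G m $ k = G (m-1) $ k - G (m-1) $ (k-1)"
proof -
  obtain k' where k: "k = Suc k'" using assms by (cases k) auto
  define j where "j = int (Suc k') - m"
  have a: "G m $ Suc k' = Dd (Suc k') j / fact (Suc k')" by (simp add: G_nth j_def)
  have b: "G (m-1) $ Suc k' = Dd (Suc k') (j+1) / fact (Suc k')" by (simp add: G_nth j_def)
  have jj: "int k' - (m - 1) = j" by (simp add: j_def)
  have c: "G (m-1) $ k' = Dd k' j / fact k'" by (simp add: G_nth jj)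
  have f: "(fact (Suc k') :: real) = real (Suc k') * fact k'" by simp
  have fk: "(fact k' :: real) \<noteq> 0" by simp
  have kk: "Suc k' - 1 = k'" by simp
  have alg: "K * (x / (K * F)) = (K * x + K * y) / (K * F) - y / F"
    if "K \<noteq> 0" "F \<noteq> 0" for K F x y :: real using that by (simp add: field_simps)
  show ?thesis unfolding k kk a b c Dd_rec f by (rule alg) simp_all
qed

theorem corollary2:
  fixes m :: int
  shows "(m > 0 \<longrightarrow> (\<exists>p :: real poly. G m = fps_of_poly p \<and> degree p = nat m \<and> coeff p 0 = 0))
       \<and> (m > 1 \<longrightarrow> (\<forall>k::nat. 1 \<le> k \<and> int k \<le> m \<longrightarrow>
             real k * g m k = g (m - 1) k + g (m - 1) (k - 1)))"
proof (intro conjI impI allI)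
  assume m: "m > 0"
  define M where "M = nat m"
  define p where "p = (\<Sum>i\<le>M. monom (G m $ i) i)"
  have cp: "coeff p n = G m $ n" for n
  proof (cases "n \<le> M")
    case True
    then show ?thesis unfolding p_def by (rule coeff_sum_monom)
  next
    case False
    then have "coeff p n = 0" unfolding p_def coeff_sum by (intro sum.neutral) auto
    moreover have "G m $ n = 0" using False m by (intro G_van) (auto simp: M_def)
    ultimately show ?thesis by simp
  qed
  have "G m = fps_of_poly p" by (intro fps_ext) (simp add: cp)
  moreover have "degree p = nat m"
  proof (rule antisym)
    show "degree p \<le> nat m"
      by (rule degree_le) (use m in \<open>auto simp: cp intro!: G_van\<close>)
    show "nat m \<le> degree p" by (rule le_degree) (use m G_lead in \<open>simp add: cp\<close>)
  qed
  moreover have "coeff p 0 = 0" by (simp add: cp G_0)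
  ultimately show "\<exists>p :: real poly. G m = fps_of_poly p \<and> degree p = nat m \<and> coeff p 0 = 0" by blast
next
  fix k :: nat
  assume m: "m > 1" and k: "1 \<le> k \<and> int k \<le> m"
  have g1: "g m k = (-1)^(k-1) * G m $ k" using k by (simp add: g_def)
  have g2: "g (m-1) k = (-1)^(k-1) * G (m-1) $ k"
  proof (cases "int k > m - 1")
    case True
    then have "G (m-1) $ k = 0" using m by (intro G_van) auto
    then show ?thesis using True by (simp add: g_def)
  qed (use k in \<open>simp add: g_def\<close>)
  have g3: "g (m-1) (k-1) = - ((-1)^(k-1) * G (m-1) $ (k-1))"
  proof (cases "k = 1")
    case True
    then show ?thesis by (simp add: g_def G_0)
  next
    case False
    then obtain k' where k': "k = Suc (Suc k')" using k by (cases k; cases "k-1") auto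
    show ?thesis using k k' by (simp add: g_def)
  qed
  show "real k * g m k = g (m - 1) k + g (m - 1) (k - 1)"
  proof -
    have e: "G (m-1) $ k = real k * G m $ k + G (m-1) $ (k-1)" using G_rec[of k m] k by simp
    show ?thesis unfolding g1 g2 g3 e by (simp add: algebra_simps)
  qed
qed

end
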